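(* Let $\mathbb{F}_q$ be a finite field and $n\geq 1$. Fix any $P_0\in\mathbb{P}^n(\mathbb{F}_q)$ and $P_1,P_2\in\mathbb{P}^1(\mathbb{F}_q)$ with $P_1\neq P_2$. Then there exists a rational map $h\colon \mathbb{P}^n\dashrightarrow\mathbb{P}^1$ defined over $\mathbb{F}_q$ such that $h(P_0)=P_1$ and $h(P)=P_2$ for all $P\in\mathbb{P}^n(\mathbb{F}_q)\setminus\{P_0\}$ (in particular $h$ is defined at every point of $\mathbb{P}^n(\mathbb{F}_q)$). *)

theory Defs
  imports Main "HOL-Library.Poly_Mapping"
begin

(* Multivariate polynomials in variables X_0, X_1, ... with coefficients in 'a,
   represented (as in the AFP MPoly library) as finitely supported maps from
   monomials (finitely supported exponent vectors nat =>0 nat) to coefficients.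
   Multiplication is the convolution product from Poly_Mapping. *)
type_synonym 'a mpol = "(nat \<Rightarrow>\<^sub>0 nat) \<Rightarrow>\<^sub>0 'a"

definition mpol_eval :: "'a::comm_semiring_1 mpol \<Rightarrow> (nat \<Rightarrow> 'a) \<Rightarrow> 'a" where
  "mpol_eval p x = (\<Sum>m\<in>Poly_Mapping.keys p.
       Poly_Mapping.lookup p m * (\<Prod>i\<in>Poly_Mapping.keys m. x i ^ Poly_Mapping.lookup m i))"

definition homog :: "nat \<Rightarrow> nat \<Rightarrow> 'a::zero mpol \<Rightarrow> bool" where
  "homog n d p \<longleftrightarrow> (\<forall>m\<in>Poly_Mapping.keys p.
       (\<forall>i\<in>Poly_Mapping.keys m. i \<le> n) \<and> (\<Sum>i\<in>Poly_Mapping.keys m. Poly_Mapping.lookup m i) = d)"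

definition proj_pt :: "nat \<Rightarrow> (nat \<Rightarrow> 'a::field) \<Rightarrow> bool" where
  "proj_pt n x \<longleftrightarrow> (\<exists>i\<le>n. x i \<noteq> 0) \<and> (\<forall>i>n. x i = 0)"

definition proj_eq :: "(nat \<Rightarrow> 'a::field) \<Rightarrow> (nat \<Rightarrow> 'a) \<Rightarrow> bool" where
  "proj_eq x y \<longleftrightarrow> (\<exists>c. c \<noteq> 0 \<and> y = (\<lambda>i. c * x i))"

definition proj1_pt :: "'a::field \<times> 'a \<Rightarrow> bool" where
  "proj1_pt v \<longleftrightarrow> v \<noteq> (0, 0)"

definition proj1_eq :: "'a::field \<times> 'a \<Rightarrow> 'a \<times> 'a \<Rightarrow> bool" where
  "proj1_eq v w \<longleftrightarrow> (\<exists>c. c \<noteq> 0 \<and> fst w = c * fst v \<and> snd w = c * snd v)"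

(* A rational map P^n --> P^1 defined over F is given by a pair [F : G] of homogeneous
   polynomials of the same degree with coefficients in F, not both zero;
   two pairs define the same rational map iff F * G' = F' * G. *)
definition rat_map_rep :: "nat \<Rightarrow> 'a::field mpol \<times> 'a mpol \<Rightarrow> bool" where
  "rat_map_rep n h \<longleftrightarrow> (\<exists>d. homog n d (fst h) \<and> homog n d (snd h)) \<and> h \<noteq> (0, 0)"

definition rat_map_equiv :: "'a::field mpol \<times> 'a mpol \<Rightarrow> 'a mpol \<times> 'a mpol \<Rightarrow> bool" where
  "rat_map_equiv h h' \<longleftrightarrow> fst h * snd h' = fst h' * snd h"

definition rat_map_value :: "nat \<Rightarrow> 'a::field mpol \<times> 'a mpol \<Rightarrow> (nat \<Rightarrow> 'a) \<Rightarrow> 'a \<times> 'a \<Rightarrow> bool" where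
  "rat_map_value n h x v \<longleftrightarrow> (\<exists>h'. rat_map_rep n h' \<and> rat_map_equiv h h' \<and>
      proj1_pt (mpol_eval (fst h') x, mpol_eval (snd h') x) \<and>
      proj1_eq (mpol_eval (fst h') x, mpol_eval (snd h') x) v)"

end

theory Submission
  imports Defs
begin

definition mon :: "(nat \<Rightarrow>\<^sub>0 nat) \<Rightarrow> (nat \<Rightarrow> 'a::comm_semiring_1) \<Rightarrow> 'a" where
  "mon m x = (\<Prod>i\<in>Poly_Mapping.keys m. x i ^ Poly_Mapping.lookup m i)"

lemma mon_superset:
  assumes "finite T" "Poly_Mapping.keys m \<subseteq> T"
  shows "mon m x = (\<Prod>i\<in>T. x i ^ Poly_Mapping.lookup m i)"
  unfolding mon_def
  by (rule prod.mono_neutral_left) (use assms in \<open>auto simp: in_keys_iff\<close>)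

lemma mon_add: "mon (a + b) x = mon a x * mon b x"
proof -
  let ?T = "Poly_Mapping.keys a \<union> Poly_Mapping.keys b"
  have "mon (a + b) x = (\<Prod>i\<in>?T. x i ^ Poly_Mapping.lookup (a+b) i)"
    using keys_add[of a b] by (intro mon_superset) auto
  also have "\<dots> = (\<Prod>i\<in>?T. x i ^ Poly_Mapping.lookup a i) * (\<Prod>i\<in>?T. x i ^ Poly_Mapping.lookup b i)"
    by (simp add: lookup_add power_add prod.distrib)
  also have "\<dots> = mon a x * mon b x"
    by (subst (1 2) mon_superset[of ?T]) auto
  finally show ?thesis .
qed

lemma mon_zero [simp]: "mon 0 x = 1"
  by (simp add: mon_def)

lemma eval_mon: "mpol_eval p x = (\<Sum>m\<in>Poly_Mapping.keys p. Poly_Mapping.lookup p m * mon m x)"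
  by (simp add: mpol_eval_def mon_def)

lemma eval_superset:
  assumes "finite S" "Poly_Mapping.keys p \<subseteq> S"
  shows "mpol_eval p x = (\<Sum>m\<in>S. Poly_Mapping.lookup p m * mon m x)"
  unfolding eval_mon
  by (rule sum.mono_neutral_left) (use assms in \<open>auto simp: in_keys_iff\<close>)

lemma eval_zero [simp]: "mpol_eval 0 x = 0"
  by (simp add: mpol_eval_def)

lemma eval_add: "mpol_eval (p + q) x = mpol_eval p x + mpol_eval q x"
proof -
  let ?S = "Poly_Mapping.keys p \<union> Poly_Mapping.keys q"
  have "mpol_eval (p + q) x = (\<Sum>m\<in>?S. Poly_Mapping.lookup (p+q) m * mon m x)"
    using keys_add[of p q] by (intro eval_superset) auto
  also have "\<dots> = (\<Sum>m\<in>?S. Poly_Mapping.lookup p m * mon m x) + (\<Sum>m\<in>?S. Poly_Mapping.lookup q m * mon m x)"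
    by (simp add: lookup_add distrib_right sum.distrib)
  also have "\<dots> = mpol_eval p x + mpol_eval q x"
    by (subst (1 2) eval_superset[of ?S]) auto
  finally show ?thesis .
qed

lemma eval_single: "mpol_eval (Poly_Mapping.single m c) x = c * mon m x"
  by (simp add: eval_mon)

lemma eval_sum: "mpol_eval (sum f A) x = (\<Sum>a\<in>A. mpol_eval (f a) x)"
  by (induction A rule: infinite_finite_induct) (auto simp: eval_add)

lemma decomp: "p = (\<Sum>m\<in>Poly_Mapping.keys p. Poly_Mapping.single m (Poly_Mapping.lookup p m))"
  by (rule poly_mapping_eqI)
     (auto simp: lookup_sum lookup_single when_def in_keys_iff
           intro!: sum.neutral[symmetric] elim!: sum.remove[THEN trans])

lemma eval_mult: "mpol_eval (p * q) (x :: nat \<Rightarrow> 'a::comm_ring_1) = mpol_eval p x * mpol_eval q x"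
proof -
  have "p * q = (\<Sum>a\<in>Poly_Mapping.keys p. \<Sum>b\<in>Poly_Mapping.keys q.
          Poly_Mapping.single a (Poly_Mapping.lookup p a) * Poly_Mapping.single b (Poly_Mapping.lookup q b))"
  proof -
    have "p * q = (\<Sum>a\<in>Poly_Mapping.keys p. Poly_Mapping.single a (Poly_Mapping.lookup p a)) *
       (\<Sum>b\<in>Poly_Mapping.keys q. Poly_Mapping.single b (Poly_Mapping.lookup q b))"
      by (simp only: decomp[symmetric])
    then show ?thesis by (simp only: sum_product)
  qed
  then have "mpol_eval (p * q) x = (\<Sum>a\<in>Poly_Mapping.keys p. \<Sum>b\<in>Poly_Mapping.keys q.
         (Poly_Mapping.lookup p a * mon a x) * (Poly_Mapping.lookup q b * mon b x))"
    by (simp add: eval_sum mult_single eval_single mon_add mult_ac)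
  also have "\<dots> = mpol_eval p x * mpol_eval q x"
    by (simp add: eval_mon sum_product)
  finally show ?thesis .
qed

lemma eval_uminus: "mpol_eval (- p) (x :: nat \<Rightarrow> 'a::comm_ring_1) = - mpol_eval p x"
proof -
  have "mpol_eval (- p + p) x = 0" by simp
  then show ?thesis by (simp only: eval_add) (simp add: eq_neg_iff_add_eq_0)
qed

lemma eval_minus: "mpol_eval (p - q) (x :: nat \<Rightarrow> 'a::comm_ring_1) = mpol_eval p x - mpol_eval q x"
  by (simp only: diff_conv_add_uminus eval_add eval_uminus)

lemma eval_one: "mpol_eval (1 :: 'a::comm_ring_1 mpol) x = 1"
proof -
  have h1: "(1 :: 'a mpol) = Poly_Mapping.single 0 1" by (rule poly_mapping_eqI) (simp add: lookup_one lookup_single when_def)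
  show ?thesis by (subst h1) (simp only: eval_single mon_zero mult_1_right)
qed

lemma eval_pow: "mpol_eval (p ^ k) (x :: nat \<Rightarrow> 'a::comm_ring_1) = mpol_eval p x ^ k"
  by (induction k) (auto simp: eval_one eval_mult)

lemma eval_prod: "mpol_eval (prod f A) (x :: nat \<Rightarrow> 'a::comm_ring_1) = (\<Prod>a\<in>A. mpol_eval (f a) x)"
  by (induction A rule: infinite_finite_induct) (auto simp: eval_one eval_mult)

definition deg :: "(nat \<Rightarrow>\<^sub>0 nat) \<Rightarrow> nat" where
  "deg m = (\<Sum>i\<in>Poly_Mapping.keys m. Poly_Mapping.lookup m i)"

lemma keys_add_nat: "Poly_Mapping.keys (a + b :: nat \<Rightarrow>\<^sub>0 nat) = Poly_Mapping.keys a \<union> Poly_Mapping.keys b"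
  by (auto simp: in_keys_iff lookup_add)

lemma deg_superset:
  assumes "finite T" "Poly_Mapping.keys m \<subseteq> T"
  shows "deg m = (\<Sum>i\<in>T. Poly_Mapping.lookup m i)"
  unfolding deg_def
  by (rule sum.mono_neutral_left) (use assms in \<open>auto simp: in_keys_iff\<close>)

lemma deg_add: "deg (a + b) = deg a + deg b"
proof -
  let ?T = "Poly_Mapping.keys a \<union> Poly_Mapping.keys b"
  have "deg (a + b) = (\<Sum>i\<in>?T. Poly_Mapping.lookup (a+b) i)"
    by (intro deg_superset) (auto simp: keys_add_nat)
  also have "\<dots> = (\<Sum>i\<in>?T. Poly_Mapping.lookup a i) + (\<Sum>i\<in>?T. Poly_Mapping.lookup b i)"
    by (simp add: lookup_add sum.distrib)
  also have "\<dots> = deg a + deg b"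
    by (subst (1 2) deg_superset[of ?T]) auto
  finally show ?thesis .
qed

lemma homog_iff: "homog n d p \<longleftrightarrow> (\<forall>m\<in>Poly_Mapping.keys p. (\<forall>i\<in>Poly_Mapping.keys m. i \<le> n) \<and> deg m = d)"
  by (simp add: homog_def deg_def)

lemma homog_zero [simp]: "homog n d 0"
  by (simp add: homog_def)

lemma homog_add: "homog n d p \<Longrightarrow> homog n d q \<Longrightarrow> homog n d (p + q)"
  using keys_add[of p q] unfolding homog_def by blast

lemma homog_diff: "homog n d p \<Longrightarrow> homog n d q \<Longrightarrow> homog n d (p - q)"
  using keys_diff[of p q] unfolding homog_def by blast

lemma homog_mult:
  assumes "homog n d p" "homog n e q" shows "homog n (d + e) (p * q)"
  unfolding homog_iff
proof
  fix m assume "m \<in> Poly_Mapping.keys (p * q)"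
  then obtain a b where "m = a + b" "a \<in> Poly_Mapping.keys p" "b \<in> Poly_Mapping.keys q"
    using keys_mult[of p q] by blast
  then show "(\<forall>i\<in>Poly_Mapping.keys m. i \<le> n) \<and> deg m = d + e"
    using assms unfolding homog_iff by (auto simp: keys_add_nat deg_add)
qed

lemma homog_one: "homog n 0 1"
  by (simp add: homog_iff deg_def)

lemma homog_pow: "homog n d p \<Longrightarrow> homog n (k * d) (p ^ k)"
  by (induction k) (auto simp: homog_one dest: homog_mult)

lemma homog_sum: "(\<And>a. a \<in> A \<Longrightarrow> homog n d (f a)) \<Longrightarrow> homog n d (sum f A)"
  by (induction A rule: infinite_finite_induct) (auto intro: homog_add)

lemma homog_prod: "(\<And>a. a \<in> A \<Longrightarrow> homog n (g a) (f a)) \<Longrightarrow> homog n (sum g A) (prod f A)"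
  by (induction A rule: infinite_finite_induct) (auto simp: homog_one intro: homog_mult)

lemma homog_cong: "homog n d p \<Longrightarrow> d = e \<Longrightarrow> homog n e p"
  by simp

definition var :: "nat \<Rightarrow> 'a::comm_ring_1 mpol" where
  "var i = Poly_Mapping.single (Poly_Mapping.single i 1) 1"

definition const :: "'a::comm_ring_1 \<Rightarrow> 'a mpol" where
  "const c = Poly_Mapping.single 0 c"

lemma homog_var: "i \<le> n \<Longrightarrow> homog n 1 (var i)"
  by (simp add: homog_iff var_def deg_def)

lemma homog_const: "homog n 0 (const c)"
  by (simp add: homog_iff const_def deg_def)

lemma eval_var: "mpol_eval (var i) x = x i"
  by (simp add: var_def eval_single mon_def)

lemma eval_const: "mpol_eval (const c) x = c"
  by (simp add: const_def eval_single)

lemma card_ge2: "card (UNIV :: 'a::{finite,field} set) \<ge> 2"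
proof -
  have "card {0::'a, 1} = 2" by simp
  moreover have "card {0::'a, 1} \<le> card (UNIV :: 'a set)" by (rule card_mono) auto
  ultimately show ?thesis by simp
qed

lemma fin_pow:
  fixes a :: "'a::{finite,field}"
  assumes "a \<noteq> 0"
  shows "a ^ (card (UNIV :: 'a set) - 1) = 1"
proof -
  have c: "card (UNIV - {0::'a}) = card (UNIV :: 'a set) - 1" by (simp add: card_Diff_subset)
  have "(\<Prod>y\<in>UNIV-{0::'a}. a * y) = a ^ (card (UNIV :: 'a set) - 1) * \<Prod>(UNIV-{0::'a})"
    by (simp add: prod.distrib c)
  moreover have "(\<Prod>y\<in>UNIV-{0::'a}. a * y) = (\<Prod>y\<in>UNIV-{0::'a}. y)"
    by (rule prod.reindex_bij_witness[of _ "\<lambda>y. y / a" "\<lambda>y. a * y"]) (use assms in auto)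
  moreover have "\<Prod>(UNIV-{0::'a}) \<noteq> 0" by simp
  ultimately show ?thesis by simp
qed

definition Theta :: "nat \<Rightarrow> nat \<Rightarrow> (nat \<Rightarrow> 'a::comm_ring_1 mpol) \<Rightarrow> 'a mpol" where
  "Theta e r ys = (\<Sum>j\<le>r. ys j ^ (e * (r + 1 - j)) * (\<Prod>i<j. ys j ^ e - ys i ^ e))"

definition thv :: "nat \<Rightarrow> nat \<Rightarrow> (nat \<Rightarrow> 'a::comm_ring_1) \<Rightarrow> 'a" where
  "thv e r y = (\<Sum>j\<le>r. y j ^ (e * (r + 1 - j)) * (\<Prod>i<j. y j ^ e - y i ^ e))"

lemma eval_Theta: "mpol_eval (Theta e r ys) x = thv e r (\<lambda>j. mpol_eval (ys j) x)"
  by (simp add: Theta_def thv_def eval_sum eval_mult eval_pow eval_prod eval_minus)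

lemma homog_Theta:
  assumes "\<And>j. j \<le> r \<Longrightarrow> homog n 1 (ys j)"
  shows "homog n (e * (r + 1)) (Theta e r ys)"
  unfolding Theta_def
proof (rule homog_sum)
  fix j assume j: "j \<in> {..r}"
  have h1: "homog n (e * (r + 1 - j) * 1) (ys j ^ (e * (r + 1 - j)))"
    using j assms by (intro homog_pow) auto
  have h2: "homog n (\<Sum>i<j. e * 1) (\<Prod>i<j. ys j ^ e - ys i ^ e)"
    using j assms by (intro homog_prod homog_diff homog_pow) auto
  show "homog n (e * (r + 1)) (ys j ^ (e * (r + 1 - j)) * (\<Prod>i<j. ys j ^ e - ys i ^ e))"
  proof (rule homog_cong[OF homog_mult[OF h1 h2]])
    have "r + 1 - j + j = r + 1" using j by simp
    then have "e * (r + 1 - j) + e * j = e * (r + 1)" by (metis add_mult_distrib2)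
    then show "e * (r + 1 - j) * 1 + (\<Sum>i<j. e * 1) = e * (r + 1)" by (simp add: mult.commute)
  qed
qed

lemma thv_val:
  fixes y :: "nat \<Rightarrow> 'a::field"
  assumes e: "e \<ge> 1" and pw: "\<And>a::'a. a \<noteq> 0 \<Longrightarrow> a ^ e = 1"
  shows "thv e r y = (if \<exists>j\<le>r. y j \<noteq> 0 then 1 else 0)"
proof (cases "\<exists>j\<le>r. y j \<noteq> 0")
  case False
  have "thv e r y = 0" unfolding thv_def
    by (rule sum.neutral) (use False e in \<open>auto simp: zero_power\<close>)
  then show ?thesis using False by simp
next
  case True
  define j0 where "j0 = (LEAST j. j \<le> r \<and> y j \<noteq> 0)"
  have j0: "j0 \<le> r" "y j0 \<noteq> 0" using LeastI_ex[OF True[simplified Bex_def[symmetric]]]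
    unfolding j0_def by auto
  have below: "y i = 0" if "i < j0" for i
    using not_less_Least[of i "\<lambda>j. j \<le> r \<and> y j \<noteq> 0"] that j0 unfolding j0_def by auto
  let ?t = "\<lambda>j. y j ^ (e * (r + 1 - j)) * (\<Prod>i<j. y j ^ e - y i ^ e)"
  have others: "?t j = 0" if "j \<le> r" "j \<noteq> j0" for j
  proof (cases "y j = 0")
    case True then show ?thesis using that e by (simp add: zero_power)
  next
    case False
    then have "j0 < j" using below that by (metis linorder_neqE_nat)
    then have "(\<Prod>i<j. y j ^ e - y i ^ e) = 0"
      using pw[OF False] pw[OF j0(2)] by (intro prod_zero) (auto intro!: bexI[of _ j0])
    then show ?thesis by simp
  qed
  have tj0: "?t j0 = 1"
  proof -
    have "y j0 ^ (e * (r + 1 - j0)) = 1" by (simp add: power_mult pw[OF j0(2)])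
    moreover have "(\<Prod>i<j0. y j0 ^ e - y i ^ e) = 1"
      using pw[OF j0(2)] below e by (intro prod.neutral) (auto simp: zero_power)
    ultimately show ?thesis by simp
  qed
  have "thv e r y = ?t j0 + (\<Sum>j\<in>{..r} - {j0}. ?t j)"
    unfolding thv_def using j0 by (subst sum.remove[of _ j0]) auto
  also have "(\<Sum>j\<in>{..r} - {j0}. ?t j) = 0" using others by (intro sum.neutral) auto
  finally show ?thesis using tj0 True by simp
qed

theorem lemma2p5:
  fixes n :: nat and p0 :: "nat \<Rightarrow> 'a::{finite, field}" and p1 p2 :: "'a \<times> 'a"
  assumes "n \<ge> 1"
    and "proj_pt n p0"
    and "proj1_pt p1" and "proj1_pt p2" and "\<not> proj1_eq p1 p2"
  shows "\<exists>h. rat_map_rep n h \<and> rat_map_value n h p0 p1 \<and>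
           (\<forall>x. proj_pt n x \<and> \<not> proj_eq p0 x \<longrightarrow> rat_map_value n h x p2)"
proof -
  obtain k where k: "k \<le> n" "p0 k \<noteq> 0" using assms(2) unfolding proj_pt_def by blast
  define e where "e = card (UNIV :: 'a set) - 1"
  have e1: "e \<ge> 1" using card_ge2[where 'a='a] unfolding e_def by simp
  have pw: "\<And>a::'a. a \<noteq> 0 \<Longrightarrow> a ^ e = 1" unfolding e_def by (rule fin_pow)
  define ms :: "nat \<Rightarrow> 'a mpol" where "ms i = const (p0 k) * var i - const (p0 i) * var k" for i
  define Psi where "Psi = Theta e n ms"
  define Phi where "Phi = Theta e n var - Psi"
  define F where "F = const (fst p1) * Phi + const (fst p2) * Psi"
  define G where "G = const (snd p1) * Phi + const (snd p2) * Psi"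
  have hms: "homog n 1 (ms i)" if "i \<le> n" for i
    unfolding ms_def using homog_mult[OF homog_const homog_var] that k
    by (intro homog_diff) auto
  have hPsi: "homog n (e * (n + 1)) Psi" unfolding Psi_def by (rule homog_Theta[OF hms])
  have hPhi: "homog n (e * (n + 1)) Phi" unfolding Phi_def
    by (intro homog_diff hPsi homog_Theta homog_var)
  have hF: "homog n (e * (n + 1)) F" unfolding F_def
    using homog_mult[OF homog_const hPhi] homog_mult[OF homog_const hPsi] by (intro homog_add) auto
  have hG: "homog n (e * (n + 1)) G" unfolding G_def
    using homog_mult[OF homog_const hPhi] homog_mult[OF homog_const hPsi] by (intro homog_add) auto
  define psi where "psi x = (if \<exists>i\<le>n. p0 k * x i - p0 i * x k \<noteq> 0 then 1 else (0::'a))" for x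
  have evPsi: "mpol_eval Psi x = psi x" for x
    unfolding Psi_def eval_Theta
    by (subst thv_val[OF e1 pw]) (auto simp: psi_def ms_def eval_minus eval_mult eval_const eval_var)
  have evPhi: "mpol_eval Phi x = 1 - psi x" if "proj_pt n x" for x
  proof -
    have "mpol_eval (Theta e n var) x = 1" unfolding eval_Theta
      using that by (subst thv_val[OF e1 pw]) (auto simp: eval_var proj_pt_def)
    then show ?thesis unfolding Phi_def by (simp add: eval_minus evPsi)
  qed
  have evF: "mpol_eval F x = fst p1 * (1 - psi x) + fst p2 * psi x" if "proj_pt n x" for x
    unfolding F_def using that by (simp add: eval_add eval_mult eval_const evPhi evPsi)
  have evG: "mpol_eval G x = snd p1 * (1 - psi x) + snd p2 * psi x" if "proj_pt n x" for x
    unfolding G_def using that by (simp add: eval_add eval_mult eval_const evPhi evPsi)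
  have psi0: "psi p0 = 0" unfolding psi_def by (auto simp: mult.commute)
  have psi1: "psi x = 1" if "proj_pt n x" "\<not> proj_eq p0 x" for x
  proof (rule ccontr)
    assume "psi x \<noteq> 1"
    then have z: "\<And>i. i \<le> n \<Longrightarrow> p0 k * x i = p0 i * x k" unfolding psi_def by (auto split: if_splits)
    define c where "c = x k / p0 k"
    have xe: "x i = c * p0 i" for i
    proof (cases "i \<le> n")
      case True then show ?thesis using z[OF True] k(2) unfolding c_def by (simp add: field_simps)
    next
      case False then show ?thesis using that(1) assms(2) unfolding proj_pt_def by auto
    qed
    have "c \<noteq> 0"
    proof
      assume "c = 0"
      then show False using that(1) xe unfolding proj_pt_def by auto
    qed
    then have "proj_eq p0 x" unfolding proj_eq_def using xe by auto
    then show False using that(2) by simp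
  qed
  have vp0: "(mpol_eval F p0, mpol_eval G p0) = p1"
    using evF[OF assms(2)] evG[OF assms(2)] psi0 by simp
  have vx: "(mpol_eval F x, mpol_eval G x) = p2" if "proj_pt n x" "\<not> proj_eq p0 x" for x
    using evF[OF that(1)] evG[OF that(1)] psi1[OF that] by simp
  have rep: "rat_map_rep n (F, G)"
    unfolding rat_map_rep_def using hF hG vp0 assms(3) unfolding proj1_pt_def by auto
  have val: "rat_map_value n (F, G) x v" if "(mpol_eval F x, mpol_eval G x) = v" "proj1_pt v" for x v
    unfolding rat_map_value_def
    by (rule exI[of _ "(F, G)"]) (use rep that in \<open>auto simp: rat_map_equiv_def proj1_eq_def intro: exI[of _ 1]\<close>)
  show ?thesis
    using rep val[OF vp0 assms(3)] val[OF vx assms(4)] by blast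
qed

end
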